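(* Let $n\ge2$, $m_1,\dots,m_n\ge1$, $X_i=\{0,\dots,m_i-1\}$, and let $T$ be the rooted tree whose level-$i$ vertices ($0\le i\le n$) are the words $x_1\cdots x_i$ with $x_j\in X_j$, the parent of $x_1\cdots x_i$ being $x_1\cdots x_{i-1}$; identify its last level $L_n$ with $X_1\times\cdots\times X_n$. Let $\bar p(x,y)$ ($x,y\in L_n$) be the insect transition probability, and $\alpha_1,\dots,\alpha_n$ as in the context. Set $p^0_i=\alpha_1\alpha_2\cdots\alpha_{n-i}(1-\alpha_{n-i+1})$ for $i=1,\dots,n-1$ and $p^0_n=1-\alpha_1$, and let $P$ be the nested product $$P=\sum_{i=1}^np^0_i\,(I_1\otimes\cdots\otimes I_{i-1}\otimes J_i\otimes J_{i+1}\otimes\cdots\otimes J_n),$$ i.e. $p(x,y)=\sum_{i=1}^np^0_i\big(\prod_{j<i}\delta(x_j,y_j)\big)\frac{1}{m_im_{i+1}\cdots m_n}$. Then $p(x,y)=\bar p(x,y)$ for all $x,y\in L_n$.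
   Context: Simple random walk on $T$: from each vertex move to a uniformly chosen neighbour (neighbours are parent and children). For $x,y\in L_n$, $\bar p(x,y)$ is the probability that the simple random walk started at $x$ is at $y$ at the first time $t\ge1$ at which it lies in $L_n$. Let $x_0=(0,\dots,0)\in L_n$ and for $0\le j\le n$ let $\xi_j$ be the ancestor of $x_0$ at level $n-j$ (so $\xi_0=x_0$, $\xi_n$ the root). For $1\le j\le n-1$, $\alpha_j$ is the probability that the simple random walk started at $\xi_j$ visits $\xi_{j+1}$ before visiting $L_n$; set $\alpha_n=0$. $I_i$ is the identity and $J_i$ the $m_i\times m_i$ matrix with all entries $1/m_i$; $\delta(a,b)=1$ if $a=b$ and $0$ otherwise. *)

theory Defs
  imports Complex_Main
begin

text \<open>Vertices of the tree T are words (lists) x_1...x_i with i \<le> n and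
  x_j \<in> {0..<m j}; coordinate x_j is stored at list position j-1.
  The root is the empty word; the parent of a nonempty word is its butlast.\<close>

definition tree_vertex :: "(nat \<Rightarrow> nat) \<Rightarrow> nat \<Rightarrow> nat list \<Rightarrow> bool" where
  "tree_vertex m n v \<longleftrightarrow> length v \<le> n \<and> (\<forall>j<length v. v ! j < m (Suc j))"

definition leaf :: "(nat \<Rightarrow> nat) \<Rightarrow> nat \<Rightarrow> nat list \<Rightarrow> bool" where
  "leaf m n v \<longleftrightarrow> tree_vertex m n v \<and> length v = n"

definition nbrs :: "(nat \<Rightarrow> nat) \<Rightarrow> nat \<Rightarrow> nat list \<Rightarrow> nat list set" where
  "nbrs m n v =
     (if v = [] then {} else {butlast v}) \<union>
     (if length v < n then {v @ [c] | c. c < m (Suc (length v))} else {})"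

definition srw :: "(nat \<Rightarrow> nat) \<Rightarrow> nat \<Rightarrow> nat list \<Rightarrow> nat list \<Rightarrow> real" where
  "srw m n v w = (if w \<in> nbrs m n v then 1 / real (card (nbrs m n v)) else 0)"

fun path_prob :: "(nat \<Rightarrow> nat) \<Rightarrow> nat \<Rightarrow> nat list list \<Rightarrow> real" where
  "path_prob m n (a # b # rest) = srw m n a b * path_prob m n (b # rest)"
| "path_prob m n _ = 1"

definition hit_paths ::
  "(nat \<Rightarrow> nat) \<Rightarrow> nat \<Rightarrow> nat list set \<Rightarrow> nat list \<Rightarrow> nat list \<Rightarrow> nat \<Rightarrow> nat list list set" where
  "hit_paths m n A x y t =
     {vs. length vs = Suc t \<and> hd vs = x \<and> last vs = y \<and>
          (\<forall>i<length vs. tree_vertex m n (vs ! i)) \<and>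
          (\<forall>i. 0 < i \<and> i < t \<longrightarrow> vs ! i \<notin> A)}"

text \<open>Probability that SRW from x, at the first time t \<ge> 1 it lies in A \<union> {y},
  is at y (i.e. it hits y at time t \<ge> 1 having avoided A at times 1..t-1).\<close>
definition first_hit_prob ::
  "(nat \<Rightarrow> nat) \<Rightarrow> nat \<Rightarrow> nat list set \<Rightarrow> nat list \<Rightarrow> nat list \<Rightarrow> real" where
  "first_hit_prob m n A x y = (\<Sum>t. \<Sum>vs\<in>hit_paths m n A x y (Suc t). path_prob m n vs)"

definition pbar :: "(nat \<Rightarrow> nat) \<Rightarrow> nat \<Rightarrow> nat list \<Rightarrow> nat list \<Rightarrow> real" where
  "pbar m n x y = first_hit_prob m n {v. leaf m n v} x y"

definition xi :: "nat \<Rightarrow> nat \<Rightarrow> nat list" where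
  "xi n j = replicate (n - j) 0"

text \<open>alpha j (1 \<le> j \<le> n-1): probability that SRW from xi j visits xi (j+1)
  before visiting L_n; alpha n = 0.\<close>
definition alpha :: "(nat \<Rightarrow> nat) \<Rightarrow> nat \<Rightarrow> nat \<Rightarrow> real" where
  "alpha m n j = (if j = n then 0 else
     first_hit_prob m n ({v. leaf m n v} \<union> {xi n (Suc j)}) (xi n j) (xi n (Suc j)))"

definition p0 :: "(nat \<Rightarrow> nat) \<Rightarrow> nat \<Rightarrow> nat \<Rightarrow> real" where
  "p0 m n i = (if i = n then 1 - alpha m n 1
               else (\<Prod>k=1..n-i. alpha m n k) * (1 - alpha m n (n - i + 1)))"

definition pnest :: "(nat \<Rightarrow> nat) \<Rightarrow> nat \<Rightarrow> nat list \<Rightarrow> nat list \<Rightarrow> real" where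
  "pnest m n x y = (\<Sum>i=1..n. p0 m n i *
      (\<Prod>j\<in>{1..<i}. if x ! (j - 1) = y ! (j - 1) then 1 else 0) /
      (\<Prod>j=i..n. real (m j)))"

end

theory Submission
  imports Defs
begin


lemma finite_TV: "finite {v. tree_vertex m n v}"
proof -
  define B where "B = (\<Sum>i\<le>n. m i)"
  have "{v. tree_vertex m n v} \<subseteq> {xs. set xs \<subseteq> {..<B} \<and> length xs \<le> n}"
  proof
    fix v assume "v \<in> {v. tree_vertex m n v}"
    then have a: "length v \<le> n" "\<forall>j<length v. v ! j < m (Suc j)" by (auto simp: tree_vertex_def)
    have "set v \<subseteq> {..<B}"
    proof
      fix c assume "c \<in> set v"
      then obtain j where j: "j < length v" "v ! j = c" by (auto simp: in_set_conv_nth)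
      have "m (Suc j) \<le> B" unfolding B_def
        by (rule member_le_sum) (use j a in auto)
      with a j show "c \<in> {..<B}" by fastforce
    qed
    with a show "v \<in> {xs. set xs \<subseteq> {..<B} \<and> length xs \<le> n}" by simp
  qed
  thus ?thesis by (rule finite_subset) (simp add: finite_lists_length_le)
qed

lemma finite_HP: "finite (hit_paths m n A x y t)"
proof -
  have "hit_paths m n A x y t \<subseteq> {vs. set vs \<subseteq> {v. tree_vertex m n v} \<and> length vs = Suc t}"
    by (auto simp: hit_paths_def in_set_conv_nth)
  thus ?thesis by (rule finite_subset) (simp add: finite_lists_length_eq finite_TV)
qed

lemma finite_nbrs: "finite (nbrs m n v)"
proof -
  have "{v @ [c] |c. c < m (Suc (length v))} = (\<lambda>c. v @ [c]) ` {..<m (Suc (length v))}" by auto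
  thus ?thesis by (simp add: nbrs_def)
qed

lemma nbrs_TV: "tree_vertex m n v \<Longrightarrow> z \<in> nbrs m n v \<Longrightarrow> tree_vertex m n z"
  by (auto simp: nbrs_def tree_vertex_def nth_append nth_butlast less_Suc_eq split: if_splits)

lemma srw_nonneg: "srw m n v w \<ge> 0" by (simp add: srw_def)

lemma pp_nonneg: "path_prob m n vs \<ge> 0"
  by (induction m n vs rule: path_prob.induct) (auto simp: srw_nonneg)

definition ff where "ff m n A x y t = (\<Sum>vs\<in>hit_paths m n A x y (Suc t). path_prob m n vs)"

lemma ff_nonneg: "ff m n A x y t \<ge> 0"
  by (simp add: ff_def sum_nonneg pp_nonneg)

lemma HP1: "hit_paths m n A x y (Suc 0) = (if tree_vertex m n x \<and> tree_vertex m n y then {[x,y]} else {})"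
proof -
  have "vs \<in> hit_paths m n A x y (Suc 0) \<longleftrightarrow> vs = [x,y] \<and> tree_vertex m n x \<and> tree_vertex m n y" for vs
  proof
    assume "vs \<in> hit_paths m n A x y (Suc 0)"
    then have h: "length vs = 2" "hd vs = x" "last vs = y" "\<forall>i<length vs. tree_vertex m n (vs ! i)"
      by (auto simp: hit_paths_def)
    then obtain a b where "vs = [a,b]" by (auto simp: numeral_2_eq_2 length_Suc_conv)
    with h show "vs = [x,y] \<and> tree_vertex m n x \<and> tree_vertex m n y"
      by (auto simp: less_Suc_eq)
  next
    assume "vs = [x,y] \<and> tree_vertex m n x \<and> tree_vertex m n y"
    then show "vs \<in> hit_paths m n A x y (Suc 0)"
      by (auto simp: hit_paths_def less_Suc_eq)
  qed
  thus ?thesis by auto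
qed

lemma ff0: assumes "tree_vertex m n x" shows "ff m n A x y 0 = srw m n x y"
proof (cases "tree_vertex m n y")
  case True thus ?thesis using assms by (simp add: ff_def HP1)
next
  case False
  hence "y \<notin> nbrs m n x" using nbrs_TV[OF assms] by blast
  thus ?thesis using False by (simp add: ff_def HP1 srw_def)
qed



lemma HPstep:
  assumes tx: "tree_vertex m n x"
  shows "hit_paths m n A x y (Suc (Suc t)) =
    (\<lambda>(z,ws). x # ws) ` (SIGMA z:{z. tree_vertex m n z \<and> z \<notin> A}. hit_paths m n A z y (Suc t))"
proof (intro set_eqI iffI)
  fix vs assume vs: "vs \<in> hit_paths m n A x y (Suc (Suc t))"
  then have h: "length vs = Suc (Suc (Suc t))" "hd vs = x" "last vs = y"
      "\<forall>i<length vs. tree_vertex m n (vs ! i)" "\<forall>i. 0 < i \<and> i < Suc (Suc t) \<longrightarrow> vs ! i \<notin> A"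
    by (auto simp: hit_paths_def)
  then obtain ws where ws: "vs = x # ws" by (cases vs) auto
  have "ws \<noteq> []" using h ws by auto
  have "ws \<in> hit_paths m n A (hd ws) y (Suc t)"
    unfolding hit_paths_def
  proof (intro CollectI conjI allI impI)
    show "length ws = Suc (Suc t)" using h ws by simp
    show "hd ws = hd ws" ..
    show "last ws = y" using h ws \<open>ws \<noteq> []\<close> by simp
    fix i
    { assume "i < length ws" thus "tree_vertex m n (ws ! i)" using h(4) ws
        by (metis Suc_less_eq length_Cons nth_Cons_Suc) }
    { assume "0 < i \<and> i < Suc t" thus "ws ! i \<notin> A" using h(5) ws
        by (metis Suc_less_eq nth_Cons_Suc zero_less_Suc) }
  qed
  moreover have "tree_vertex m n (hd ws)" using h(4) ws \<open>ws \<noteq> []\<close>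
    by (metis hd_conv_nth length_Cons length_greater_0_conv nth_Cons_Suc Suc_less_eq)
  moreover have "hd ws \<notin> A" using h(5) ws \<open>ws \<noteq> []\<close>
    by (metis hd_conv_nth nth_Cons_Suc zero_less_Suc Suc_less_eq length_greater_0_conv)
  ultimately show "vs \<in> (\<lambda>(z,ws). x # ws) ` (SIGMA z:{z. tree_vertex m n z \<and> z \<notin> A}. hit_paths m n A z y (Suc t))"
    using ws by (auto intro!: image_eqI[where x="(hd ws, ws)"])
next
  fix vs assume "vs \<in> (\<lambda>(z,ws). x # ws) ` (SIGMA z:{z. tree_vertex m n z \<and> z \<notin> A}. hit_paths m n A z y (Suc t))"
  then obtain z ws where vs: "vs = x # ws" and z: "tree_vertex m n z" "z \<notin> A"
     and ws: "ws \<in> hit_paths m n A z y (Suc t)" by auto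
  then have h: "length ws = Suc (Suc t)" "hd ws = z" "last ws = y"
      "\<forall>i<length ws. tree_vertex m n (ws ! i)" "\<forall>i. 0 < i \<and> i < Suc t \<longrightarrow> ws ! i \<notin> A"
    by (auto simp: hit_paths_def)
  have ne: "ws \<noteq> []" using h by auto
  show "vs \<in> hit_paths m n A x y (Suc (Suc t))"
    unfolding hit_paths_def
  proof (intro CollectI conjI allI impI)
    show "length vs = Suc (Suc (Suc t))" using h vs by simp
    show "hd vs = x" using vs by simp
    show "last vs = y" using h vs ne by simp
    fix i
    { assume i: "i < length vs" show "tree_vertex m n (vs ! i)"
      proof (cases i)
        case 0 thus ?thesis using vs tx by simp
      next
        case (Suc k) thus ?thesis using vs h(4) i by simp
      qed }
    { assume i: "0 < i \<and> i < Suc (Suc t)" show "vs ! i \<notin> A"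
      proof (cases i)
        case 0 thus ?thesis using i by simp
      next
        case (Suc k) show ?thesis
        proof (cases k)
          case 0 thus ?thesis using Suc vs h(2) ne z by (simp add: hd_conv_nth)
        next
          case (Suc k') thus ?thesis using \<open>i = Suc k\<close> vs h(5) i by auto
        qed
      qed }
  qed
qed

lemma ff_step_aux:
  assumes tx: "tree_vertex m n x"
  shows "ff m n A x y (Suc t) = (\<Sum>z\<in>{z. tree_vertex m n z \<and> z \<notin> A}. srw m n x z * ff m n A z y t)"
proof -
  let ?Z = "{z. tree_vertex m n z \<and> z \<notin> A}"
  have inj: "inj_on (\<lambda>(z,ws). x # ws) (SIGMA z:?Z. hit_paths m n A z y (Suc t))"
    by (auto simp: inj_on_def hit_paths_def)
  have finZ: "finite ?Z" using finite_TV by (rule finite_subset[rotated]) auto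
  have "ff m n A x y (Suc t) = (\<Sum>p\<in>(SIGMA z:?Z. hit_paths m n A z y (Suc t)). path_prob m n (x # snd p))"
    unfolding ff_def HPstep[OF tx] by (subst sum.reindex[OF inj]) (simp add: case_prod_beta)
  also have "\<dots> = (\<Sum>z\<in>?Z. \<Sum>ws\<in>hit_paths m n A z y (Suc t). path_prob m n (x # ws))"
    using sum.Sigma[OF finZ, of "\<lambda>z. hit_paths m n A z y (Suc t)" "\<lambda>z ws. path_prob m n (x#ws)"] finite_HP
    by (simp add: case_prod_beta)
  also have "\<dots> = (\<Sum>z\<in>?Z. srw m n x z * ff m n A z y t)"
  proof (rule sum.cong[OF refl])
    fix z assume "z \<in> ?Z"
    have "path_prob m n (x # ws) = srw m n x z * path_prob m n ws" if "ws \<in> hit_paths m n A z y (Suc t)" for ws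
    proof -
      from that obtain w ws' where "ws = w # ws'" "w = z" by (cases ws) (auto simp: hit_paths_def)
      thus ?thesis by simp
    qed
    thus "(\<Sum>ws\<in>hit_paths m n A z y (Suc t). path_prob m n (x # ws)) = srw m n x z * ff m n A z y t"
      by (simp add: ff_def sum_distrib_left)
  qed
  finally show ?thesis .
qed

lemma ff_step:
  assumes tx: "tree_vertex m n x"
  shows "ff m n A x y (Suc t) = (\<Sum>z\<in>nbrs m n x - A. srw m n x z * ff m n A z y t)"
proof -
  have finZ: "finite {z. tree_vertex m n z \<and> z \<notin> A}" using finite_TV by (rule finite_subset[rotated]) auto
  show ?thesis unfolding ff_step_aux[OF tx]
    by (rule sum.mono_neutral_right[OF finZ]) (auto simp: nbrs_TV[OF tx] srw_def)
qed

lemma srw_sum_le: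
  assumes "y \<in> A"
  shows "srw m n x y + (\<Sum>z\<in>nbrs m n x - A. srw m n x z) \<le> 1"
proof -
  have tot: "(\<Sum>z\<in>nbrs m n x. srw m n x z) \<le> 1"
    by (simp add: srw_def)
  show ?thesis
  proof (cases "y \<in> nbrs m n x")
    case True
    have "srw m n x y + (\<Sum>z\<in>nbrs m n x - A. srw m n x z) = (\<Sum>z\<in>insert y (nbrs m n x - A). srw m n x z)"
      using assms by (simp add: finite_nbrs)
    also have "\<dots> \<le> (\<Sum>z\<in>nbrs m n x. srw m n x z)"
      by (rule sum_mono2) (use True in \<open>auto simp: finite_nbrs srw_nonneg\<close>)
    finally show ?thesis using tot by simp
  next
    case False
    have "(\<Sum>z\<in>nbrs m n x - A. srw m n x z) \<le> (\<Sum>z\<in>nbrs m n x. srw m n x z)"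
      by (rule sum_mono2) (auto simp: finite_nbrs srw_nonneg)
    thus ?thesis using tot False by (simp add: srw_def)
  qed
qed

lemma ff_partial_le:
  assumes "y \<in> A"
  shows "tree_vertex m n x \<Longrightarrow> (\<Sum>t<N. ff m n A x y t) \<le> 1"
proof (induction N arbitrary: x)
  case 0 thus ?case by simp
next
  case (Suc N)
  have "(\<Sum>t<Suc N. ff m n A x y t) = ff m n A x y 0 + (\<Sum>t<N. ff m n A x y (Suc t))"
    by (simp only: sum.lessThan_Suc_shift)
  also have "\<dots> = srw m n x y + (\<Sum>z\<in>nbrs m n x - A. srw m n x z * (\<Sum>t<N. ff m n A z y t))"
    using Suc.prems by (simp add: ff0 ff_step sum_distrib_left sum.swap[of _ "{..<N}"])
  also have "\<dots> \<le> srw m n x y + (\<Sum>z\<in>nbrs m n x - A. srw m n x z)"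
  proof -
    have "(\<Sum>z\<in>nbrs m n x - A. srw m n x z * (\<Sum>t<N. ff m n A z y t)) \<le> (\<Sum>z\<in>nbrs m n x - A. srw m n x z)"
    proof (rule sum_mono)
      fix z assume "z \<in> nbrs m n x - A"
      hence "(\<Sum>t<N. ff m n A z y t) \<le> 1" using Suc.IH nbrs_TV[OF Suc.prems] by auto
      thus "srw m n x z * (\<Sum>t<N. ff m n A z y t) \<le> srw m n x z"
        using srw_nonneg by (simp add: mult_left_le)
    qed
    thus ?thesis by simp
  qed
  also have "\<dots> \<le> 1" by (rule srw_sum_le[OF assms])
  finally show ?case .
qed

lemma ff_summable:
  assumes "y \<in> A" "tree_vertex m n x"
  shows "summable (ff m n A x y)"
  by (rule summableI_nonneg_bounded[OF ff_nonneg ff_partial_le[OF assms]])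

lemma fhp_step:
  assumes "y \<in> A" "tree_vertex m n x"
  shows "first_hit_prob m n A x y = srw m n x y + (\<Sum>z\<in>nbrs m n x - A. srw m n x z * first_hit_prob m n A z y)"
proof -
  have fe: "first_hit_prob m n A x y = suminf (ff m n A x y)" for x
    by (simp add: first_hit_prob_def ff_def[abs_def])
  have "suminf (ff m n A x y) = ff m n A x y 0 + (\<Sum>t. ff m n A x y (Suc t))"
    using suminf_split_head[OF ff_summable[OF assms]] by simp
  also have "(\<Sum>t. ff m n A x y (Suc t)) = (\<Sum>t. \<Sum>z\<in>nbrs m n x - A. srw m n x z * ff m n A z y t)"
    using ff_step[OF assms(2)] by simp
  also have "\<dots> = (\<Sum>z\<in>nbrs m n x - A. \<Sum>t. srw m n x z * ff m n A z y t)"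
    by (rule suminf_sum) (use assms nbrs_TV in \<open>auto intro!: summable_mult ff_summable\<close>)
  also have "\<dots> = (\<Sum>z\<in>nbrs m n x - A. srw m n x z * suminf (ff m n A z y))"
    by (rule sum.cong[OF refl]) (use assms nbrs_TV in \<open>auto intro!: suminf_mult ff_summable\<close>)
  finally show ?thesis using assms by (simp add: fe ff0)
qed



lemma nbrs_nonroot: "v \<noteq> [] \<Longrightarrow> length v < n \<Longrightarrow>
  nbrs m n v = insert (butlast v) ((\<lambda>c. v @ [c]) ` {..<m (Suc (length v))})"
  by (auto simp: nbrs_def)

lemma nbrs_root: "0 < n \<Longrightarrow> nbrs m n [] = (\<lambda>c. [c]) ` {..<m (Suc 0)}"
  by (auto simp: nbrs_def)

lemma nbrs_leaf: "v \<noteq> [] \<Longrightarrow> \<not> length v < n \<Longrightarrow> nbrs m n v = {butlast v}"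
  by (auto simp: nbrs_def)

lemma card_nbrs_nonroot: "v \<noteq> [] \<Longrightarrow> length v < n \<Longrightarrow>
  card (nbrs m n v) = Suc (m (Suc (length v)))"
proof -
  assume a: "v \<noteq> []" "length v < n"
  have "butlast v \<notin> (\<lambda>c. v @ [c]) ` {..<m (Suc (length v))}"
  proof
    assume "butlast v \<in> (\<lambda>c. v @ [c]) ` {..<m (Suc (length v))}"
    thus False by (force dest: arg_cong[of _ _ length])
  qed
  moreover have "inj_on (\<lambda>c. v @ [c]) {..<m (Suc (length v))}" by (auto simp: inj_on_def)
  ultimately show ?thesis using a by (simp add: nbrs_nonroot card_image)
qed

lemma card_nbrs_root: "0 < n \<Longrightarrow> card (nbrs m n []) = m (Suc 0)"
  by (simp add: nbrs_root card_image inj_on_def)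

lemma sum_diff_if: "finite B \<Longrightarrow> (\<Sum>z\<in>B - A. g z) = (\<Sum>z\<in>B. if z \<in> A then 0 else g z)"
  by (simp add: sum.If_cases Diff_eq)

lemma sumN_nonroot:
  assumes "v \<noteq> []" "length v < n"
  shows "(\<Sum>z\<in>nbrs m n v - A. srw m n v z * h z) =
    ((if butlast v \<in> A then 0 else h (butlast v)) +
     (\<Sum>c<m (Suc (length v)). if v @ [c] \<in> A then 0 else h (v @ [c]))) / (real (m (Suc (length v))) + 1)"
proof -
  let ?G = "\<lambda>z. if z \<in> A then 0 else h z"
  let ?D = "real (m (Suc (length v))) + 1"
  have "(\<Sum>z\<in>nbrs m n v - A. srw m n v z * h z) = (\<Sum>z\<in>nbrs m n v. ?G z / ?D)"
    unfolding sum_diff_if[OF finite_nbrs]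
    by (rule sum.cong[OF refl]) (use assms in \<open>simp add: srw_def card_nbrs_nonroot\<close>)
  also have "\<dots> = (?G (butlast v) + (\<Sum>z\<in>(\<lambda>c. v @ [c]) ` {..<m (Suc (length v))}. ?G z)) / ?D"
  proof -
    have "butlast v \<notin> (\<lambda>c. v @ [c]) ` {..<m (Suc (length v))}"
    proof
      assume "butlast v \<in> (\<lambda>c. v @ [c]) ` {..<m (Suc (length v))}"
      thus False by (force dest: arg_cong[of _ _ length])
    qed
    thus ?thesis using assms by (simp add: nbrs_nonroot sum_divide_distrib add_divide_distrib)
  qed
  also have "(\<Sum>z\<in>(\<lambda>c. v @ [c]) ` {..<m (Suc (length v))}. ?G z) = (\<Sum>c<m (Suc (length v)). ?G (v @ [c]))"
    by (rule sum.reindex_cong[where l="\<lambda>c. v @ [c]"]) (auto simp: inj_on_def)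
  finally show ?thesis by simp
qed

lemma sumN_root:
  assumes "0 < n"
  shows "(\<Sum>z\<in>nbrs m n [] - A. srw m n [] z * h z) =
     (\<Sum>c<m (Suc 0). if [c] \<in> A then 0 else h [c]) / real (m (Suc 0))"
proof -
  let ?G = "\<lambda>z. if z \<in> A then 0 else h z"
  have "(\<Sum>z\<in>nbrs m n [] - A. srw m n [] z * h z) = (\<Sum>z\<in>nbrs m n []. ?G z / real (m (Suc 0)))"
    unfolding sum_diff_if[OF finite_nbrs]
    by (rule sum.cong[OF refl]) (use assms in \<open>simp add: srw_def card_nbrs_root\<close>)
  also have "\<dots> = (\<Sum>c<m (Suc 0). ?G [c] / real (m (Suc 0)))"
    using assms unfolding nbrs_root[OF assms]
    by (intro sum.reindex_cong[where l="\<lambda>c. [c]"]) (auto simp: inj_on_def)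
  finally show ?thesis by (simp add: sum_divide_distrib)
qed



lemma uniq:
  assumes fin: "finite S"
    and S: "\<forall>v\<in>S. tree_vertex m n v \<and> length v < n"
    and m1: "\<forall>j\<in>{1..n}. m j \<ge> 1"
    and closed: "\<forall>v\<in>S. nbrs m n v - A \<subseteq> S"
    and eqh: "\<forall>v\<in>S. h v = b v + (\<Sum>z\<in>nbrs m n v - A. srw m n v z * h z)"
    and eqg: "\<forall>v\<in>S. g v = b v + (\<Sum>z\<in>nbrs m n v - A. srw m n v z * g z)"
  shows "\<forall>v\<in>S. h v = g v"
proof (cases "S = {}")
  case True thus ?thesis by simp
next
  case False
  define d where "d v = h v - g v" for v
  have eqd: "d v = (\<Sum>z\<in>nbrs m n v - A. srw m n v z * d z)" if "v \<in> S" for v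
    using eqh eqg that by (simp add: d_def sum_subtractf[symmetric] right_diff_distrib)
  define M where "M = Max ((\<lambda>v. \<bar>d v\<bar>) ` S)"
  have leM: "\<bar>d v\<bar> \<le> M" if "v \<in> S" for v using fin that by (simp add: M_def)
  have "M \<in> (\<lambda>v. \<bar>d v\<bar>) ` S" unfolding M_def using fin False by (intro Max_in) auto
  then obtain v0 where v0: "v0 \<in> S" "\<bar>d v0\<bar> = M" by auto
  have M0: "M \<ge> 0" using v0 by auto
  have key: "\<forall>v\<in>S. n - length v = k \<longrightarrow> \<bar>d v\<bar> = M \<longrightarrow> M = 0" for k
  proof (induction k rule: less_induct)
    case (less k)
    show ?case
    proof (intro ballI impI)
      fix v assume v: "v \<in> S" "n - length v = k" "\<bar>d v\<bar> = M"
      let ?N = "nbrs m n v - A"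
      let ?deg = "card (nbrs m n v)"
      have lv: "length v < n" "tree_vertex m n v" using S v by auto
      have m1v: "m (Suc (length v)) \<ge> 1" using m1 lv by auto
      have ch: "v @ [0] \<in> nbrs m n v" using lv m1v by (auto simp: nbrs_def)
      have degpos: "?deg > 0" using ch finite_nbrs by (metis card_gt_0_iff empty_iff)
      have srwN: "srw m n v z = 1 / ?deg" if "z \<in> ?N" for z using that by (simp add: srw_def)
      have "M = \<bar>\<Sum>z\<in>?N. srw m n v z * d z\<bar>" using eqd v by simp
      also have "\<dots> \<le> (\<Sum>z\<in>?N. \<bar>srw m n v z * d z\<bar>)" by (rule sum_abs)
      also have "\<dots> = (\<Sum>z\<in>?N. \<bar>d z\<bar> / ?deg)"
        by (rule sum.cong[OF refl]) (simp add: srwN abs_mult)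
      finally have M1: "M \<le> (\<Sum>z\<in>?N. \<bar>d z\<bar> / ?deg)" .
      have finN: "finite ?N" by (simp add: finite_nbrs)
      have M2: "(\<Sum>z\<in>?N. \<bar>d z\<bar> / ?deg) \<le> (\<Sum>z\<in>?N. M / ?deg)"
        by (rule sum_mono) (use closed v leM in \<open>auto intro!: divide_right_mono\<close>)
      have cN: "card ?N \<le> ?deg" by (rule card_mono) (auto simp: finite_nbrs)
      show "M = 0"
      proof (cases "v @ [0] \<in> ?N")
        case False
        then have "?N \<subset> nbrs m n v" using ch by auto
        then have "card ?N < ?deg" by (rule psubset_card_mono[OF finite_nbrs])
        then have lt: "real (card ?N) / ?deg < 1" using degpos by simp
        have "M \<le> real (card ?N) / ?deg * M" using M1 M2 by simp
        then have "M * (1 - real (card ?N) / ?deg) \<le> 0" by (simp add: algebra_simps)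
        moreover have "1 - real (card ?N) / ?deg > 0" using lt by simp
        ultimately show "M = 0" using M0 by (simp add: mult_le_0_iff)
      next
        case True
        have sumle: "(\<Sum>z\<in>?N. M / ?deg) \<le> M"
        proof -
          have "real (card ?N) * M \<le> real ?deg * M" using cN M0 by (simp add: mult_right_mono)
          thus ?thesis using degpos by (simp add: divide_le_eq mult.commute)
        qed
        have "(\<Sum>z\<in>?N. (M - \<bar>d z\<bar>) / ?deg) = (\<Sum>z\<in>?N. M / ?deg) - (\<Sum>z\<in>?N. \<bar>d z\<bar> / ?deg)"
          by (simp only: diff_divide_distrib sum_subtractf)
        also have "\<dots> \<le> 0" using M1 sumle by simp
        finally have s0: "(\<Sum>z\<in>?N. (M - \<bar>d z\<bar>) / ?deg) \<le> 0" .
        have nn: "\<forall>z\<in>?N. (M - \<bar>d z\<bar>) / ?deg \<ge> 0"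
        proof
          fix z assume "z \<in> ?N"
          then have "z \<in> S" using closed v by blast
          then have "\<bar>d z\<bar> \<le> M" by (rule leM)
          thus "(M - \<bar>d z\<bar>) / ?deg \<ge> 0" by simp
        qed
        have "0 \<le> (\<Sum>z\<in>?N. (M - \<bar>d z\<bar>) / ?deg)" by (rule sum_nonneg) (use nn in blast)
        with s0 have "(\<Sum>z\<in>?N. (M - \<bar>d z\<bar>) / ?deg) = 0" by linarith
        then have "\<forall>z\<in>?N. (M - \<bar>d z\<bar>) / ?deg = 0"
          using sum_nonneg_eq_0_iff[OF finN, of "\<lambda>z. (M - \<bar>d z\<bar>) / ?deg"] nn by simp
        then have "(M - \<bar>d (v @ [0])\<bar>) / ?deg = 0" using True by (rule bspec)
        then have e: "\<bar>d (v @ [0])\<bar> = M" using degpos by simp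
        have vS: "v @ [0] \<in> S" using True closed v by blast
        have lt: "n - length (v @ [0]) < k" using v lv by simp
        show "M = 0" using less.IH[OF lt] vS e by blast
      qed
    qed
  qed
  have "M = 0" using key v0 by blast
  thus ?thesis using leM by (auto simp: d_def)
qed



fun aseq :: "(nat \<Rightarrow> nat) \<Rightarrow> nat \<Rightarrow> nat \<Rightarrow> real" where
  "aseq m n 0 = 0"
| "aseq m n (Suc k) = 1 / (real (m (n - k)) + 1 - real (m (n - k)) * aseq m n k)"

lemma aseq_bounds:
  assumes m1: "\<forall>j\<in>{1..n}. m j \<ge> 1"
  shows "k < n \<Longrightarrow> 0 \<le> aseq m n k \<and> aseq m n k < 1"
proof (induction k)
  case 0 thus ?case by simp
next
  case (Suc k)
  let ?c = "real (m (n - k))"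
  let ?a = "aseq m n k"
  have a: "0 \<le> ?a" "?a < 1" using Suc by auto
  have c: "?c \<ge> 1" using m1 Suc.prems by auto
  have "?c * (1 - ?a) > 0" using a c by simp
  then have den: "?c + 1 - ?c * ?a > 1" by (simp add: algebra_simps)
  thus ?case by simp
qed

lemma aseq_id:
  assumes m1: "\<forall>j\<in>{1..n}. m j \<ge> 1" and K: "1 \<le> K" "K < n"
  shows "aseq m n K * (real (m (n - K + 1)) + 1 - real (m (n - K + 1)) * aseq m n (K - 1)) = 1"
proof -
  obtain K' where K': "K = Suc K'" using K by (cases K) auto
  have a: "0 \<le> aseq m n K'" "aseq m n K' < 1" using aseq_bounds[OF m1, of K'] K K' by auto
  have eq: "n - K + 1 = n - K'" using K K' by simp
  have "real (m (n - K')) * aseq m n K' \<le> real (m (n - K'))"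
    using a by (simp add: mult_left_le)
  then have "real (m (n - K')) + 1 - real (m (n - K')) * aseq m n K' > 0" by linarith
  thus ?thesis using K' eq by simp
qed

lemma alg1:
  fixes a a' c P :: real
  assumes "a * (c + 1 - c * a') = 1" "c \<ge> 0"
  shows "a * P = (P + c * (a' * (a * P))) / (c + 1)"
proof -
  have "a * P * (c + 1) = P + c * (a' * (a * P))"
  proof -
    have "a * P * (c + 1) = P * (a * (c + 1 - c * a')) + c * (a' * (a * P))" by (simp add: algebra_simps)
    thus ?thesis using assms(1) by simp
  qed
  thus ?thesis using assms(2) by (simp add: field_simps)
qed

definition Sj where "Sj m n j = {v. tree_vertex m n v \<and> length v < n \<and> n - Suc j < length v \<and> take (n - Suc j) v = xi n (Suc j)}"
definition Aj where "Aj m n j = {v. leaf m n v} \<union> {xi n (Suc j)}"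
definition gi where "gi m n j v = (\<Prod>k\<in>{n - length v..j}. aseq m n k)"

lemma Sj_closed:
  assumes "v \<in> Sj m n j" "z \<in> nbrs m n v - Aj m n j" "j < n"
  shows "z \<in> Sj m n j"
proof -
  have v: "tree_vertex m n v" "length v < n" "n - Suc j < length v" "take (n - Suc j) v = xi n (Suc j)"
    using assms by (auto simp: Sj_def)
  have ne: "v \<noteq> []" using v by auto
  have tz: "tree_vertex m n z" using nbrs_TV[OF v(1)] assms by auto
  have zl: "length z < n" using tz assms by (auto simp: Aj_def leaf_def tree_vertex_def)
  have zy: "z \<noteq> xi n (Suc j)" using assms by (auto simp: Aj_def)
  from assms(2) ne v(2) have "z = butlast v \<or> (\<exists>c. z = v @ [c])" by (auto simp: nbrs_nonroot)
  thus ?thesis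
  proof
    assume zb: "z = butlast v"
    have "length v - 1 \<noteq> n - Suc j"
    proof
      assume h: "length v - 1 = n - Suc j"
      have "butlast v = take (length v - 1) v" by (simp add: butlast_conv_take)
      thus False using h v zy zb by simp
    qed
    hence "n - Suc j < length z" using v zb by auto
    moreover have "take (n - Suc j) z = xi n (Suc j)" using zb v \<open>n - Suc j < length z\<close>
      by (simp add: take_butlast)
    ultimately show ?thesis using tz zl by (simp add: Sj_def)
  next
    assume "\<exists>c. z = v @ [c]"
    then obtain c where zc: "z = v @ [c]" by blast
    show ?thesis using zc v tz zl by (auto simp: Sj_def)
  qed
qed



lemma gi_eq:
  assumes m1: "\<forall>j\<in>{1..n}. m j \<ge> 1" and j: "1 \<le> j" "j < n" and vS: "v \<in> Sj m n j"
  shows "gi m n j v = srw m n v (xi n (Suc j)) + (\<Sum>z\<in>nbrs m n v - Aj m n j. srw m n v z * gi m n j z)"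
proof -
  let ?y = "xi n (Suc j)"
  let ?A = "Aj m n j"
  have v: "tree_vertex m n v" "length v < n" "n - Suc j < length v" "take (n - Suc j) v = ?y"
    using vS by (auto simp: Sj_def)
  define l where "l = length v"
  define K where "K = n - l"
  define c where "c = real (m (Suc l))"
  have ne: "v \<noteq> []" using v by auto
  have K: "1 \<le> K" "K \<le> j" using v j by (auto simp: K_def l_def)
  have ly: "length ?y = n - Suc j" by (simp add: xi_def)
  define P where "P = (\<Prod>k\<in>{Suc K..j}. aseq m n k)"
  have gv: "gi m n j v = aseq m n K * P"
    using K by (simp add: gi_def P_def K_def l_def prod.atLeast_Suc_atMost)
  have gch: "gi m n j (v @ [c']) = aseq m n (K - 1) * (aseq m n K * P)" for c'
  proof -
    have "n - length (v @ [c']) = K - 1" by (simp add: K_def l_def)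
    then have "gi m n j (v @ [c']) = (\<Prod>k\<in>{K - 1..j}. aseq m n k)" by (simp add: gi_def)
    also have "\<dots> = aseq m n (K - 1) * (\<Prod>k\<in>{Suc (K - 1)..j}. aseq m n k)"
      using K by (simp add: prod.atLeast_Suc_atMost)
    also have "Suc (K - 1) = K" using K by simp
    also have "(\<Prod>k\<in>{K..j}. aseq m n k) = aseq m n K * P"
      using K by (simp add: prod.atLeast_Suc_atMost P_def)
    finally show ?thesis .
  qed
  have id: "aseq m n K * (c + 1 - c * aseq m n (K - 1)) = 1"
  proof -
    have "n - K + 1 = Suc l" using v by (simp add: K_def l_def)
    thus ?thesis using aseq_id[OF m1 K(1)] v j K by (simp add: c_def K_def l_def)
  qed
  have par: "srw m n v ?y * (c + 1) + (if butlast v \<in> ?A then 0 else gi m n j (butlast v)) = P"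
  proof (cases "l = n - j")
    case True
    have bl: "butlast v = ?y"
    proof -
      have "butlast v = take (l - 1) v" by (simp add: butlast_conv_take l_def)
      thus ?thesis using True v j by simp
    qed
    have "?y \<in> nbrs m n v" using bl ne v by (simp add: nbrs_def)
    then have "srw m n v ?y = 1 / (c + 1)"
      using card_nbrs_nonroot[OF ne v(2)] by (simp add: srw_def c_def l_def)
    moreover have "P = 1" proof - have "K = j" using True j by (simp add: K_def) thus ?thesis by (simp add: P_def) qed
    moreover have "butlast v \<in> ?A" using bl by (simp add: Aj_def)
    moreover have "c + 1 \<noteq> 0" by (simp add: c_def)
    ultimately show ?thesis by simp
  next
    case False
    have "length (butlast v) \<noteq> length ?y" using False v ly j by (simp add: l_def)
    then have "butlast v \<noteq> ?y" by metis
    moreover have "\<not> leaf m n (butlast v)" using v by (auto simp: leaf_def)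
    ultimately have "butlast v \<notin> ?A" by (simp add: Aj_def)
    moreover have "?y \<notin> nbrs m n v"
    proof
      assume "?y \<in> nbrs m n v"
      then have "?y = butlast v \<or> (\<exists>c'. ?y = v @ [c'])" using ne v by (auto simp: nbrs_nonroot)
      thus False using \<open>butlast v \<noteq> ?y\<close> ly v by (auto dest: arg_cong[of _ _ length])
    qed
    moreover have "gi m n j (butlast v) = P"
    proof -
      have "n - length (butlast v) = Suc K" using ne v by (simp add: K_def l_def)
      thus ?thesis by (simp add: gi_def P_def)
    qed
    ultimately show ?thesis by (simp add: srw_def)
  qed
  have chi: "(\<Sum>c'<m (Suc l). if v @ [c'] \<in> ?A then 0 else gi m n j (v @ [c'])) = c * (aseq m n (K - 1) * (aseq m n K * P))"
  proof (cases "Suc l = n")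
    case True
    have "v @ [c'] \<in> ?A" if "c' < m (Suc l)" for c'
      using that True v by (auto simp: Aj_def leaf_def tree_vertex_def nth_append l_def less_Suc_eq)
    moreover have "K = 1" using True by (simp add: K_def)
    ultimately show ?thesis by simp
  next
    case False
    have "v @ [c'] \<notin> ?A" for c'
    proof -
      have "\<not> leaf m n (v @ [c'])" using False by (simp add: leaf_def l_def)
      moreover have "v @ [c'] \<noteq> ?y" using ly v by (auto dest: arg_cong[of _ _ length])
      ultimately show ?thesis by (simp add: Aj_def)
    qed
    thus ?thesis by (simp add: gch c_def)
  qed
  have "srw m n v ?y + (\<Sum>z\<in>nbrs m n v - ?A. srw m n v z * gi m n j z)
      = srw m n v ?y + ((if butlast v \<in> ?A then 0 else gi m n j (butlast v)) +
          c * (aseq m n (K - 1) * (aseq m n K * P))) / (c + 1)"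
    using sumN_nonroot[OF ne v(2), where A="?A" and h="gi m n j" and m=m] chi by (simp add: c_def l_def)
  also have "\<dots> = (P + c * (aseq m n (K - 1) * (aseq m n K * P))) / (c + 1)"
  proof -
    have cp: "c + 1 > 0" by (simp add: c_def)
    show ?thesis using par cp by (simp add: field_simps)
  qed
  also have "\<dots> = aseq m n K * P" by (rule alg1[symmetric, OF id]) (simp add: c_def)
  finally show ?thesis using gv by simp
qed

lemma alpha_eq:
  assumes n2: "n \<ge> 2" and m1: "\<forall>j\<in>{1..n}. m j \<ge> 1" and j: "1 \<le> j" "j < n"
  shows "alpha m n j = aseq m n j"
proof -
  let ?y = "xi n (Suc j)"
  let ?A = "Aj m n j"
  let ?S = "Sj m n j"
  let ?h = "\<lambda>v. first_hit_prob m n ?A v ?y"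
  have yA: "?y \<in> ?A" by (simp add: Aj_def)
  have fin: "finite ?S" by (rule finite_subset[OF _ finite_TV[of m n]]) (auto simp: Sj_def)
  have Sp: "\<forall>v\<in>?S. tree_vertex m n v \<and> length v < n" by (auto simp: Sj_def)
  have cl: "\<forall>v\<in>?S. nbrs m n v - ?A \<subseteq> ?S" using Sj_closed j by blast
  have eh: "\<forall>v\<in>?S. ?h v = srw m n v ?y + (\<Sum>z\<in>nbrs m n v - ?A. srw m n v z * ?h z)"
    using fhp_step[OF yA] Sp by blast
  have eg: "\<forall>v\<in>?S. gi m n j v = srw m n v ?y + (\<Sum>z\<in>nbrs m n v - ?A. srw m n v z * gi m n j z)"
    using gi_eq[OF m1 j] by blast
  have U: "\<forall>v\<in>?S. ?h v = gi m n j v" by (rule uniq[OF fin Sp m1 cl eh eg])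
  have xS: "xi n j \<in> ?S"
  proof -
    have "0 < m (Suc i)" if "i < n - j" for i
    proof -
      have "Suc i \<in> {1..n}" using that j by auto
      thus ?thesis using m1 by fastforce
    qed
    then have "tree_vertex m n (xi n j)"
      using j by (auto simp: tree_vertex_def xi_def)
    moreover have "take (n - Suc j) (xi n j) = ?y" by (simp add: xi_def min_def)
    ultimately show ?thesis using j by (simp add: Sj_def xi_def)
  qed
  have "alpha m n j = ?h (xi n j)" using j by (simp add: alpha_def Aj_def)
  also have "\<dots> = gi m n j (xi n j)" using U xS by blast
  also have "\<dots> = aseq m n j" using j by (simp add: gi_def xi_def)
  finally show ?thesis .
qed



definition ab where "ab m n k = (if k = n then 0 else aseq m n k)"
definition UU where "UU m n r = 1 / (\<Prod>j\<in>{Suc r..n}. real (m j))"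
definition Hc where "Hc m n y v = (\<Sum>r=0..length v. (\<Prod>k\<in>{n - length v..n - Suc r}. ab m n k) *
   (1 - ab m n (n - r)) * (if take r v = take r y then 1 else 0) * UU m n r)"

lemma Hc_rec:
  assumes "v \<noteq> []" "length v < n"
  shows "Hc m n y v = ab m n (n - length v) * Hc m n y (butlast v) +
     (1 - ab m n (n - length v)) * (if take (length v) y = v then 1 else 0) * UU m n (length v)"
proof -
  obtain l' where l': "length v = Suc l'" using assms by (cases "length v") auto
  let ?T = "\<lambda>r. (\<Prod>k\<in>{n - length v..n - Suc r}. ab m n k) *
   (1 - ab m n (n - r)) * (if take r v = take r y then 1 else 0) * UU m n r"
  have lastt: "?T (Suc l') = (1 - ab m n (n - length v)) * (if take (length v) y = v then 1 else 0) * UU m n (length v)"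
  proof -
    have "{n - length v..n - Suc (Suc l')} = {}" using assms l' by auto
    thus ?thesis using l' by (auto simp del: take_Suc)
  qed
  have front: "?T r = ab m n (n - length v) * ((\<Prod>k\<in>{n - length (butlast v)..n - Suc r}. ab m n k) *
   (1 - ab m n (n - r)) * (if take r (butlast v) = take r y then 1 else 0) * UU m n r)" if "r \<le> l'" for r
  proof -
    have "(\<Prod>k\<in>{n - length v..n - Suc r}. ab m n k) = ab m n (n - length v) * (\<Prod>k\<in>{Suc (n - length v)..n - Suc r}. ab m n k)"
      using that l' assms by (intro prod.atLeast_Suc_atMost) auto
    moreover have "Suc (n - length v) = n - length (butlast v)" using l' assms by auto
    moreover have "take r (butlast v) = take r v" using that l' by (simp add: take_butlast)
    ultimately show ?thesis by simp
  qed
  have "Hc m n y v = (\<Sum>r=0..l'. ?T r) + ?T (Suc l')"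
    unfolding Hc_def l' by (rule sum.atLeast0_atMost_Suc)
  also have "(\<Sum>r=0..l'. ?T r) = (\<Sum>r=0..l'. ab m n (n - length v) * ((\<Prod>k\<in>{n - length (butlast v)..n - Suc r}. ab m n k) *
   (1 - ab m n (n - r)) * (if take r (butlast v) = take r y then 1 else 0) * UU m n r))"
    by (rule sum.cong[OF refl]) (rule front, simp)
  also have "\<dots> = ab m n (n - length v) * Hc m n y (butlast v)"
    using l' by (simp add: Hc_def sum_distrib_left)
  finally show ?thesis using lastt by simp
qed

lemma Hc_root: "0 < n \<Longrightarrow> Hc m n y [] = UU m n 0"
  by (simp add: Hc_def ab_def)

lemma UU_Suc:
  assumes "l < n" "m (Suc l) \<ge> 1"
  shows "UU m n (Suc l) = real (m (Suc l)) * UU m n l"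
proof -
  have "(\<Prod>j\<in>{Suc l..n}. real (m j)) = real (m (Suc l)) * (\<Prod>j\<in>{Suc (Suc l)..n}. real (m j))"
    using assms by (intro prod.atLeast_Suc_atMost) auto
  thus ?thesis using assms by (simp add: UU_def)
qed

lemma ind_sum:
  fixes y v :: "nat list"
  assumes "l < length y" "y ! l < M"
  shows "(\<Sum>c<M. if take (Suc l) y = v @ [c] then 1 else 0 :: real) = (if take l y = v then 1 else 0)"
proof -
  have "take (Suc l) y = take l y @ [y ! l]" using assms by (simp add: take_Suc_conv_app_nth)
  then have "(take (Suc l) y = v @ [c]) \<longleftrightarrow> (take l y = v \<and> c = y ! l)" for c by auto
  then have "(\<Sum>c<M. if take (Suc l) y = v @ [c] then 1 else 0 :: real) = (\<Sum>c<M. if c = y ! l then (if take l y = v then 1 else 0) else 0)"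
    by (intro sum.cong) auto
  also have "\<dots> = (if take l y = v then 1 else 0)"
  proof -
    have "(\<Sum>c<M. if c = y ! l then 1 else 0 :: real) = 1"
      using sum.delta[of "{..<M}" "y ! l" "\<lambda>_. 1::real"] assms by simp
    thus ?thesis by (cases "take l y = v") (simp_all add: assms)
  qed
  finally show ?thesis .
qed

lemma alg2:
  fixes a a' c B Q H :: real
  assumes "a * (c + 1 - c * a') = 1" "c \<ge> 0" "H = a * B + (1 - a) * Q"
  shows "H = (B + c * a' * H + (1 - a') * (c * Q)) / (c + 1)"
proof -
  have e: "H * (c + 1 - c * a') = B + (c + 1 - c * a') * Q - Q"
  proof -
    have "H * (c + 1 - c * a') = B * (a * (c + 1 - c * a')) + Q * (c + 1 - c * a') - Q * (a * (c + 1 - c * a'))"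
      by (simp add: assms(3) algebra_simps)
    thus ?thesis using assms(1) by simp
  qed
  have "H * (c + 1) = B + c * a' * H + (1 - a') * (c * Q)"
    using e by (simp add: algebra_simps)
  thus ?thesis using assms(2) by (simp add: field_simps)
qed


lemma sum_lin: "(\<Sum>c\<in>S. X + Y * f c * Z) = real (card S) * X + Y * Z * (\<Sum>c\<in>S. f c :: real)"
  by (simp add: sum.distrib sum_distrib_left sum_distrib_right algebra_simps)

lemma alg3:
  fixes c B d :: real
  assumes "c > 0"
  shows "1 / (c + 1) * B + (1 - 1 / (c + 1)) * (d * (1 / c)) = d / (c + 1) + B / (c + 1)"
proof -
  have "1 - 1 / (c + 1) = c / (c + 1)" using assms by (simp add: field_simps)
  then have "(1 - 1 / (c + 1)) * (d * (1 / c)) = d / (c + 1)" using assms by simp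
  thus ?thesis by simp
qed

lemma Hc_eq:
  assumes n2: "n \<ge> 2" and m1: "\<forall>j\<in>{1..n}. m j \<ge> 1" and ly: "leaf m n y"
    and tv: "tree_vertex m n v" and lv: "length v < n"
  shows "Hc m n y v = srw m n v y + (\<Sum>z\<in>nbrs m n v - {w. leaf m n w}. srw m n v z * Hc m n y z)"
proof -
  let ?L = "{w. leaf m n w}"
  have yl: "length y = n" "\<forall>j<n. y ! j < m (Suc j)" using ly by (auto simp: leaf_def tree_vertex_def)
  define l where "l = length v"
  define M where "M = m (Suc l)"
  define c where "c = real M"
  have lvl: "l < n" using lv by (simp add: l_def)
  have M1: "M \<ge> 1" using m1 lv by (auto simp: M_def l_def)
  have cpos: "c > 0" using M1 by (simp add: c_def)
  show ?thesis
  proof (cases "v = []")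
    case True
    have lz: "l = 0" using True by (simp add: l_def)
    have "y \<notin> nbrs m n []" using n2 yl by (auto simp: nbrs_root)
    then have s0: "srw m n v y = 0" using True by (simp add: srw_def)
    have notL: "[c'] \<notin> ?L" for c' using n2 by (simp add: leaf_def)
    let ?a = "ab m n (n - 1)"
    have hc: "Hc m n y [c'] = ?a * UU m n 0 + (1 - ?a) * (if take (Suc 0) y = [] @ [c'] then 1 else 0) * UU m n (Suc 0)" for c'
      using Hc_rec[of "[c']" n m y] Hc_root[of n m y] n2 by simp
    have I: "(\<Sum>c'<M. if take (Suc 0) y = [] @ [c'] then 1 else 0 :: real) = 1"
      using ind_sum[of 0 y M "[]"] yl n2 by (simp add: M_def lz)
    have U1: "UU m n (Suc 0) = c * UU m n 0" using UU_Suc[of 0 n m] M1 n2 by (simp add: c_def M_def lz)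
    have "(\<Sum>z\<in>nbrs m n v - ?L. srw m n v z * Hc m n y z) = (\<Sum>c'<M. Hc m n y [c']) / c"
      using sumN_root[where n=n and m=m and A="?L" and h="Hc m n y"] True n2 notL by (simp add: c_def M_def lz)
    also have "(\<Sum>c'<M. Hc m n y [c']) = c * ?a * UU m n 0 + (1 - ?a) * UU m n (Suc 0)"
      unfolding hc sum_lin I by (simp add: c_def)
    also have "(c * ?a * UU m n 0 + (1 - ?a) * UU m n (Suc 0)) / c = UU m n 0"
      using cpos unfolding U1 by (simp add: field_simps)
    finally show ?thesis using s0 True Hc_root[of n m y] n2 by simp
  next
    case False
    have l1: "l \<ge> 1" using False by (simp add: l_def Suc_le_eq)
    have nbl: "butlast v \<notin> ?L" using lv by (auto simp: leaf_def)
    have Hv: "Hc m n y v = ab m n (n - l) * Hc m n y (butlast v) +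
       (1 - ab m n (n - l)) * ((if take l y = v then 1 else 0) * UU m n l)"
      using Hc_rec[OF False lv, of m y] by (simp add: l_def)
    have sN: "(\<Sum>z\<in>nbrs m n v - ?L. srw m n v z * Hc m n y z) =
        (Hc m n y (butlast v) + (\<Sum>c'<M. if v @ [c'] \<in> ?L then 0 else Hc m n y (v @ [c']))) / (c + 1)"
      using sumN_nonroot[OF False lv, where A="?L" and h="Hc m n y" and m=m] nbl
      by (simp add: c_def M_def l_def)
    show ?thesis
    proof (cases "Suc l < n")
      case True
      have s0: "srw m n v y = 0"
      proof -
        have "y \<notin> nbrs m n v" using False lv True yl
          by (auto simp: nbrs_nonroot l_def dest: arg_cong[of _ _ length])
        thus ?thesis by (simp add: srw_def)
      qed
      let ?a = "ab m n (n - l)"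
      let ?a' = "ab m n (n - Suc l)"
      let ?Q = "(if take l y = v then 1 else 0) * UU m n l"
      have id: "?a * (c + 1 - c * ?a') = 1"
      proof -
        have K: "1 \<le> n - l" "n - l < n" using l1 lv by (auto simp: l_def)
        have "n - (n - l) + 1 = Suc l" using lv by (simp add: l_def)
        moreover have "n - l - 1 = n - Suc l" by simp
        moreover have "n - Suc l \<noteq> n" "n - l \<noteq> n" using l1 n2 by auto
        ultimately show ?thesis using aseq_id[OF m1 K]
          by (simp add: ab_def c_def M_def)
      qed
      have hc: "Hc m n y (v @ [c']) = ?a' * Hc m n y v + (1 - ?a') * (if take (Suc l) y = v @ [c'] then 1 else 0) * UU m n (Suc l)" for c'
        using Hc_rec[of "v @ [c']" n m y] True by (simp add: l_def)
      have I: "(\<Sum>c'<M. if take (Suc l) y = v @ [c'] then 1 else 0 :: real) = (if take l y = v then 1 else 0)"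
        using ind_sum[of l y M v] yl True by (simp add: M_def)
      have U1: "UU m n (Suc l) = c * UU m n l" using UU_Suc[of l n m] M1 lvl by (simp add: c_def M_def)
      have ch: "(\<Sum>c'<M. if v @ [c'] \<in> ?L then 0 else Hc m n y (v @ [c'])) = c * ?a' * Hc m n y v + (1 - ?a') * (c * ?Q)"
      proof -
        have "(\<Sum>c'<M. if v @ [c'] \<in> ?L then 0 else Hc m n y (v @ [c'])) = (\<Sum>c'<M. Hc m n y (v @ [c']))"
          by (rule sum.cong[OF refl]) (use True in \<open>simp add: leaf_def l_def\<close>)
        also have "\<dots> = c * ?a' * Hc m n y v + (1 - ?a') * UU m n (Suc l) * (if take l y = v then 1 else 0)"
          unfolding hc sum_lin I by (simp add: c_def)
        finally show ?thesis unfolding U1 by (simp add: algebra_simps)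
      qed
      have "Hc m n y v = (Hc m n y (butlast v) + c * ?a' * Hc m n y v + (1 - ?a') * (c * ?Q)) / (c + 1)"
        by (rule alg2[OF id _ Hv]) (use cpos in simp)
      thus ?thesis using s0 sN ch by (simp add: add.assoc)
    next
      case False2: False
      have ln: "Suc l = n" using False2 lv by (simp add: l_def)
      have chL: "v @ [c'] \<in> ?L" if "c' < M" for c'
        using that tv ln by (auto simp: leaf_def tree_vertex_def nth_append l_def M_def less_Suc_eq)
      have chs: "(\<Sum>c'<M. if v @ [c'] \<in> ?L then 0 else Hc m n y (v @ [c'])) = 0"
        using chL by simp
      have sy: "srw m n v y = (if take l y = v then 1 / (c + 1) else 0)"
      proof -
        have "y \<in> nbrs m n v \<longleftrightarrow> take l y = v"
        proof
          assume "y \<in> nbrs m n v"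
          then have "y = butlast v \<or> (\<exists>c'. y = v @ [c'])" using False lv by (auto simp: nbrs_nonroot)
          thus "take l y = v"
          proof
            assume "y = butlast v"
            then have "length y = length (butlast v)" by simp
            thus ?thesis using yl ln by (simp add: l_def)
          next
            assume "\<exists>c'. y = v @ [c']"
            then obtain c' where "y = v @ [c']" by blast
            thus ?thesis by (simp add: l_def)
          qed
        next
          assume t: "take l y = v"
          have "y = take l y @ [y ! l]" using yl ln
            by (metis lessI take_Suc_conv_app_nth take_all order_refl)
          then have "y = v @ [y ! l]" using t by simp
          moreover have "y ! l < M" using yl ln by (metis M_def lessI)
          ultimately show "y \<in> nbrs m n v" using False lv by (auto simp: nbrs_nonroot l_def M_def)
        qed
        thus ?thesis using card_nbrs_nonroot[OF False lv]
          by (simp add: srw_def c_def M_def l_def)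
      qed
      have a1: "ab m n (n - l) = 1 / (c + 1)"
      proof -
        have "n - l = Suc 0" using ln by simp
        thus ?thesis using n2 ln by (simp add: ab_def c_def M_def)
      qed
      have Ul: "UU m n l = 1 / c"
      proof -
        have "{Suc l..n} = {n}" using ln by auto
        thus ?thesis using ln by (simp add: UU_def c_def M_def)
      qed
      have "Hc m n y v = (if take l y = v then 1 else 0) / (c + 1) + Hc m n y (butlast v) / (c + 1)"
        unfolding Hv a1 Ul by (rule alg3[OF cpos])
      then show ?thesis unfolding sy sN chs by simp
    qed
  qed
qed



lemma prod_delta:
  fixes x y :: "nat list"
  shows "r \<le> length x \<Longrightarrow> r \<le> length y \<Longrightarrow>
    (\<Prod>j\<in>{1..<Suc r}. if x ! (j - 1) = y ! (j - 1) then 1 else (0::real)) = (if take r x = take r y then 1 else 0)"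
proof (induction r)
  case 0 thus ?case by simp
next
  case (Suc r)
  have tx: "take (Suc r) x = take r x @ [x ! r]" using Suc.prems by (simp add: take_Suc_conv_app_nth)
  have ty: "take (Suc r) y = take r y @ [y ! r]" using Suc.prems by (simp add: take_Suc_conv_app_nth)
  have eq: "(take (Suc r) x = take (Suc r) y) \<longleftrightarrow> (take r x = take r y \<and> x ! r = y ! r)"
    unfolding tx ty by simp
  have "(\<Prod>j\<in>{1..<Suc (Suc r)}. if x ! (j - 1) = y ! (j - 1) then 1 else (0::real)) =
     (\<Prod>j\<in>{1..<Suc r}. if x ! (j - 1) = y ! (j - 1) then 1 else (0::real)) * (if x ! r = y ! r then 1 else 0)"
    by (subst prod.atLeastLessThan_Suc) auto
  thus ?case using Suc eq by simp
qed

theorem proposition6p4: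
  fixes m :: "nat \<Rightarrow> nat" and n :: nat
  assumes "n \<ge> 2"
    and "\<forall>j\<in>{1..n}. m j \<ge> 1"
    and "leaf m n x" and "leaf m n y"
  shows "pnest m n x y = pbar m n x y"
proof -
  note n2 = assms(1) and m1 = assms(2) and lx = assms(3) and ly = assms(4)
  let ?L = "{w. leaf m n w}"
  let ?S = "{v. tree_vertex m n v \<and> length v < n}"
  have yL: "y \<in> ?L" using ly by simp
  have xt: "tree_vertex m n x" "length x = n" "x \<noteq> []" using lx n2 by (auto simp: leaf_def)
  have yl: "length y = n" using ly by (simp add: leaf_def)
  have fin: "finite ?S" by (rule finite_subset[OF _ finite_TV[of m n]]) auto
  have Sp: "\<forall>v\<in>?S. tree_vertex m n v \<and> length v < n" by simp
  have cl: "\<forall>v\<in>?S. nbrs m n v - ?L \<subseteq> ?S"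
  proof (intro ballI subsetI)
    fix v z assume v: "v \<in> ?S" and z: "z \<in> nbrs m n v - ?L"
    have "tree_vertex m n z" using nbrs_TV[of m n v z] v z by auto
    thus "z \<in> ?S" using z by (auto simp: leaf_def tree_vertex_def)
  qed
  have eh: "\<forall>v\<in>?S. first_hit_prob m n ?L v y = srw m n v y + (\<Sum>z\<in>nbrs m n v - ?L. srw m n v z * first_hit_prob m n ?L z y)"
    using fhp_step[OF yL] by blast
  have eg: "\<forall>v\<in>?S. Hc m n y v = srw m n v y + (\<Sum>z\<in>nbrs m n v - ?L. srw m n v z * Hc m n y z)"
    using Hc_eq[OF n2 m1 ly] by blast
  have U: "\<forall>v\<in>?S. first_hit_prob m n ?L v y = Hc m n y v" by (rule uniq[OF fin Sp m1 cl eh eg])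
  have nx: "nbrs m n x = {butlast x}" using xt by (simp add: nbrs_leaf)
  have bS: "butlast x \<in> ?S"
  proof -
    have "tree_vertex m n (butlast x)" using nbrs_TV[OF xt(1)] nx by auto
    thus ?thesis using xt n2 by simp
  qed
  have bnL: "butlast x \<notin> ?L" using xt n2 by (auto simp: leaf_def)
  have "y \<noteq> butlast x" using xt yl by (metis length_butlast diff_less n2 less_irrefl zero_less_numeral zero_less_one order_less_le_trans)
  then have sy: "srw m n x y = 0" using nx by (simp add: srw_def)
  have "pbar m n x y = first_hit_prob m n ?L x y" by (simp add: pbar_def)
  also have "\<dots> = first_hit_prob m n ?L (butlast x) y"
  proof -
    have d: "nbrs m n x - ?L = {butlast x}" using nx bnL by auto
    have "srw m n x (butlast x) = 1" using nx by (simp add: srw_def)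
    thus ?thesis using fhp_step[OF yL xt(1)] d sy by simp
  qed
  also have "\<dots> = Hc m n y (butlast x)" using U bS by blast
  finally have pb: "pbar m n x y = Hc m n y (butlast x)" .
  have al: "alpha m n k = ab m n k" if "1 \<le> k" "k \<le> n" for k
  proof (cases "k = n")
    case True thus ?thesis by (simp add: alpha_def ab_def)
  next
    case False thus ?thesis using alpha_eq[OF n2 m1 that(1)] that by (simp add: ab_def)
  qed
  obtain n' where n': "n = Suc n'" using n2 by (cases n) auto
  have "pnest m n x y = (\<Sum>i=Suc 0..Suc n'. p0 m n i *
      (\<Prod>j\<in>{1..<i}. if x ! (j - 1) = y ! (j - 1) then 1 else 0) /
      (\<Prod>j=i..n. real (m j)))" by (simp add: pnest_def n')
  also have "\<dots> = (\<Sum>r=0..n'. p0 m n (Suc r) *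
      (\<Prod>j\<in>{1..<Suc r}. if x ! (j - 1) = y ! (j - 1) then 1 else 0) /
      (\<Prod>j=Suc r..n. real (m j)))" by (rule sum.shift_bounds_cl_Suc_ivl)
  also have "\<dots> = Hc m n y (butlast x)"
    unfolding Hc_def
  proof -
    have lb: "length (butlast x) = n'" using xt n' by simp
    show "(\<Sum>r=0..n'. p0 m n (Suc r) *
      (\<Prod>j\<in>{1..<Suc r}. if x ! (j - 1) = y ! (j - 1) then 1 else 0) /
      (\<Prod>j=Suc r..n. real (m j))) =
      (\<Sum>r=0..length (butlast x). (\<Prod>k\<in>{n - length (butlast x)..n - Suc r}. ab m n k) *
       (1 - ab m n (n - r)) * (if take r (butlast x) = take r y then 1 else 0) * UU m n r)"
      unfolding lb
    proof (rule sum.cong[OF refl])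
      fix r assume r: "r \<in> {0..n'}"
      have pr: "p0 m n (Suc r) = (\<Prod>k\<in>{n - n'..n - Suc r}. ab m n k) * (1 - ab m n (n - r))"
      proof -
        have nn: "n - n' = 1" using n' by simp
        have pa: "(\<Prod>k\<in>{1..n - Suc r}. alpha m n k) = (\<Prod>k\<in>{1..n - Suc r}. ab m n k)"
          by (rule prod.cong[OF refl]) (use al in auto)
        show ?thesis
        proof (cases "Suc r = n")
          case True
          then have "n - r = 1" by simp
          thus ?thesis using True nn al[of 1] n2 by (simp add: p0_def)
        next
          case False
          have "n - Suc r + 1 = n - r" using r n' by auto
          moreover have "alpha m n (n - r) = ab m n (n - r)" using al r n' by auto
          ultimately show ?thesis using False nn pa by (simp add: p0_def)
        qed
      qed
      have pd: "(\<Prod>j\<in>{1..<Suc r}. if x ! (j - 1) = y ! (j - 1) then 1 else (0::real)) =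
          (if take r (butlast x) = take r y then 1 else 0)"
      proof -
        have "take r (butlast x) = take r x" using r xt n' by (simp add: take_butlast)
        thus ?thesis using prod_delta[of r x y] r xt yl n' by simp
      qed
      show "p0 m n (Suc r) * (\<Prod>j\<in>{1..<Suc r}. if x ! (j - 1) = y ! (j - 1) then 1 else 0) /
          (\<Prod>j=Suc r..n. real (m j)) =
          (\<Prod>k\<in>{n - n'..n - Suc r}. ab m n k) * (1 - ab m n (n - r)) *
          (if take r (butlast x) = take r y then 1 else 0) * UU m n r"
        unfolding pr pd by (simp add: UU_def)
    qed
  qed
  finally show ?thesis using pb by simp
qed


end
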